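(* Let $\mathcal C$ be a concept hierarchy, $r_1,r_2,\epsilon\in[0,1]$, $a>0$ a real with $r_1\le ar_2(1-\epsilon)$, $m$ a positive integer, and let $\mathcal L$ be the network defined below with fixed sets $F$ and $E$ satisfying the stated constraints. Then for every $B\subseteq C_0$ presented at time 0 and every concept $c$ with $c\notin supp_{r_1}(B)$, no neuron $v\in reps(c)$ fires at time $level(c)$.
   Context: Concept hierarchies: fix positive integers $\ell_{max},n,k$. A universal set $D$ of concepts is partitioned into disjoint sets $D_0,\dots,D_{\ell_{max}}$ with $|D_0|=n$; $level(c)=\ell$ for $c\in D_\ell$. A concept hierarchy $\mathcal C$ consists of $C\subseteq D$, with $C_\ell=C\cap D_\ell$, and for each $c\in C_\ell$ with $1\le\ell\le\ell_{max}$ a set $children(c)\subseteq C_{\ell-1}$, such that $|C_{\ell_{max}}|=k$, $|children(c)|=k$ for all such $c$, and $children(c)\cap children(c')=\emptyset$ for distinct $c,c'\in C_\ell$. For $B\subseteq D_0$ and $r\in[0,1]$: $B(0)=B\cap C_0$; for $1\le\ell\le\ell_{max}$, $B(\ell)=\{c\in C_\ell:|children(c)\cap B(\ell-1)|\ge rk\}$; $supp_r(B)=\bigcup_{\ell}B(\ell)$. Network $\mathcal L$: neurons partitioned into layers $N_0,\dots,N_{\ell_{max}}$. Each $c\in D_0$ has a set $reps(c)$ of $m$ neurons in $N_0$, each $c\in C$ with $level(c)\ge1$ a set $reps(c)$ of $m$ neurons in $N_{level(c)}$, all pairwise disjoint. $E$ is a set of pairs $(u,v)$ with $v\in reps(c)$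 and $u\in reps(c')$ for some child $c'$ of $c$; for $u\in N_{\ell-1}$, $v\in N_\ell$, $w(u,v)=1$ iff $(u,v)\in E$, else $0$. Threshold $\tau=ar_2km(1-\epsilon)$. A fixed set $F$ of neurons is failed (failed neurons never fire). Constraints: for every concept $c$, at least $m(1-\epsilon)$ neurons of $reps(c)$ are not in $F$; and for every $c$ with $level(c)\ge1$, every $v\in reps(c)$ and every child $c'$ of $c$, there are at least $am(1-\epsilon)$ neurons $u\in reps(c')\setminus F$ with $(u,v)\in E$. Input $B\subseteq C_0$ presented at time 0: a layer-0 neuron fires at time 0 iff it is in $\bigcup_{b\in B}reps(b)\setminus F$, and no layer-0 neuron fires at any other time. A non-failed $v\in N_\ell$, $\ell\ge1$, does not fire at time 0 and fires at time $t\ge1$ iff $\sum_{u\in N_{\ell-1}}w(u,v)x_u(t-1)\ge\tau$, where $x_u(s)\in\{0,1\}$ indicates whether $u$ fires at time $s$. *)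

theory Defs
  imports Complex_Main
begin

definition concept_hierarchy ::
  "nat \<Rightarrow> nat \<Rightarrow> nat \<Rightarrow> 'c set \<Rightarrow> ('c \<Rightarrow> nat) \<Rightarrow> 'c set \<Rightarrow> ('c \<Rightarrow> 'c set) \<Rightarrow> bool" where
  "concept_hierarchy lmax n k D level C children \<longleftrightarrow>
     0 < lmax \<and> 0 < n \<and> 0 < k \<and>
     (\<forall>c\<in>D. level c \<le> lmax) \<and>
     finite {c\<in>D. level c = 0} \<and> card {c\<in>D. level c = 0} = n \<and>
     C \<subseteq> D \<and>
     finite {c\<in>C. level c = lmax} \<and> card {c\<in>C. level c = lmax} = k \<and>
     (\<forall>c\<in>C. 1 \<le> level c \<longrightarrow>
        children c \<subseteq> {c'\<in>C. level c' = level c - 1} \<and>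
        finite (children c) \<and> card (children c) = k) \<and>
     (\<forall>c\<in>C. \<forall>c'\<in>C. 1 \<le> level c \<and> level c = level c' \<and> c \<noteq> c' \<longrightarrow>
        children c \<inter> children c' = {})"

fun Blev :: "('c \<Rightarrow> nat) \<Rightarrow> 'c set \<Rightarrow> ('c \<Rightarrow> 'c set) \<Rightarrow> nat \<Rightarrow> real \<Rightarrow> 'c set \<Rightarrow> nat \<Rightarrow> 'c set" where
  "Blev level C children k r B 0 = B \<inter> {c\<in>C. level c = 0}"
| "Blev level C children k r B (Suc l) =
     {c\<in>C. level c = Suc l \<and> real (card (children c \<inter> Blev level C children k r B l)) \<ge> r * real k}"

definition supp ::
  "nat \<Rightarrow> ('c \<Rightarrow> nat) \<Rightarrow> 'c set \<Rightarrow> ('c \<Rightarrow> 'c set) \<Rightarrow> nat \<Rightarrow> real \<Rightarrow> 'c set \<Rightarrow> 'c set" where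
  "supp lmax level C children k r B = (\<Union>l\<in>{0..lmax}. Blev level C children k r B l)"

definition network ::
  "nat \<Rightarrow> 'c set \<Rightarrow> ('c \<Rightarrow> nat) \<Rightarrow> 'c set \<Rightarrow> ('c \<Rightarrow> 'c set) \<Rightarrow>
   'n set \<Rightarrow> ('n \<Rightarrow> nat) \<Rightarrow> ('c \<Rightarrow> 'n set) \<Rightarrow> nat \<Rightarrow> ('n \<times> 'n) set \<Rightarrow> bool" where
  "network lmax D level C children N layer reps m E \<longleftrightarrow>
     finite N \<and> (\<forall>v\<in>N. layer v \<le> lmax) \<and>
     (\<forall>c \<in> {c\<in>D. level c = 0} \<union> C.
        reps c \<subseteq> N \<and> finite (reps c) \<and> card (reps c) = m \<and> (\<forall>v\<in>reps c. layer v = level c)) \<and>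
     (\<forall>c \<in> {c\<in>D. level c = 0} \<union> C. \<forall>c' \<in> {c\<in>D. level c = 0} \<union> C.
        c \<noteq> c' \<longrightarrow> reps c \<inter> reps c' = {}) \<and>
     E \<subseteq> {(u, v). \<exists>c\<in>C. 1 \<le> level c \<and> v \<in> reps c \<and> (\<exists>c'\<in>children c. u \<in> reps c')}"

definition failure_constraints ::
  "'c set \<Rightarrow> ('c \<Rightarrow> nat) \<Rightarrow> 'c set \<Rightarrow> ('c \<Rightarrow> 'c set) \<Rightarrow>
   ('c \<Rightarrow> 'n set) \<Rightarrow> nat \<Rightarrow> ('n \<times> 'n) set \<Rightarrow> 'n set \<Rightarrow> real \<Rightarrow> real \<Rightarrow> bool" where
  "failure_constraints D level C children reps m E F a \<epsilon> \<longleftrightarrow>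
     (\<forall>c \<in> {c\<in>D. level c = 0} \<union> C. real (card (reps c - F)) \<ge> real m * (1 - \<epsilon>)) \<and>
     (\<forall>c\<in>C. 1 \<le> level c \<longrightarrow> (\<forall>v\<in>reps c. \<forall>c'\<in>children c.
        real (card {u \<in> reps c' - F. (u, v) \<in> E}) \<ge> a * real m * (1 - \<epsilon>)))"

definition weight :: "('n \<times> 'n) set \<Rightarrow> 'n \<Rightarrow> 'n \<Rightarrow> real" where
  "weight E u v = (if (u, v) \<in> E then 1 else 0)"

fun fires ::
  "'n set \<Rightarrow> ('n \<Rightarrow> nat) \<Rightarrow> ('c \<Rightarrow> 'n set) \<Rightarrow> ('n \<times> 'n) set \<Rightarrow> 'n set \<Rightarrow> real \<Rightarrow>
   'c set \<Rightarrow> nat \<Rightarrow> 'n \<Rightarrow> bool" where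
  "fires N layer reps E F \<tau> B 0 v \<longleftrightarrow>
     v \<in> N \<and> layer v = 0 \<and> v \<in> (\<Union>b\<in>B. reps b) - F"
| "fires N layer reps E F \<tau> B (Suc t) v \<longleftrightarrow>
     v \<in> N \<and> v \<notin> F \<and> 1 \<le> layer v \<and>
     (\<Sum>u\<in>{u\<in>N. layer u = layer v - 1}.
        weight E u v * (if fires N layer reps E F \<tau> B t u then 1 else 0)) \<ge> \<tau>"

end

theory Submission
  imports Defs
begin

theorem theorem8p4:
  fixes lmax n k m :: nat
    and D C :: "'c set" and level :: "'c \<Rightarrow> nat" and children :: "'c \<Rightarrow> 'c set"
    and N F :: "'n set" and layer :: "'n \<Rightarrow> nat" and reps :: "'c \<Rightarrow> 'n set"
    and E :: "('n \<times> 'n) set"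
    and r1 r2 \<epsilon> a :: real
    and B :: "'c set" and c :: 'c and v :: 'n
  assumes hier: "concept_hierarchy lmax n k D level C children"
    and r1: "0 \<le> r1" "r1 \<le> 1" and r2: "0 \<le> r2" "r2 \<le> 1"
    and eps: "0 \<le> \<epsilon>" "\<epsilon> \<le> 1"
    and a: "0 < a" and r1_le: "r1 \<le> a * r2 * (1 - \<epsilon>)"
    and m: "0 < m"
    and net: "network lmax D level C children N layer reps m E"
    and fail: "failure_constraints D level C children reps m E F a \<epsilon>"
    and B: "B \<subseteq> {c\<in>C. level c = 0}"
    and c: "c \<in> {c\<in>D. level c = 0} \<union> C"
    and c_notin: "c \<notin> supp lmax level C children k r1 B"
    and v: "v \<in> reps c"
  shows "\<not> fires N layer reps E F (a * r2 * real k * real m * (1 - \<epsilon>)) B (level c) v"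
proof -
  define \<tau> where "\<tau> = a * r2 * real k * real m * (1 - \<epsilon>)"
  define R where "R = {c\<in>D. level c = 0} \<union> C"
  have CD: "C \<subseteq> D" and lev: "\<forall>c\<in>D. level c \<le> lmax"
    and ch: "\<And>c. c\<in>C \<Longrightarrow> 1 \<le> level c \<Longrightarrow> children c \<subseteq> {c'\<in>C. level c' = level c - 1} \<and>
        finite (children c) \<and> card (children c) = k"
    using hier unfolding concept_hierarchy_def by auto
  have finN: "finite N" and repsR: "\<And>c. c \<in> R \<Longrightarrow> reps c \<subseteq> N \<and> finite (reps c) \<and> card (reps c) = m \<and> (\<forall>v\<in>reps c. layer v = level c)"
    and disj: "\<And>c c'. c \<in> R \<Longrightarrow> c' \<in> R \<Longrightarrow> c \<noteq> c' \<Longrightarrow> reps c \<inter> reps c' = {}"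
    and Esub: "E \<subseteq> {(u, v). \<exists>c\<in>C. 1 \<le> level c \<and> v \<in> reps c \<and> (\<exists>c'\<in>children c. u \<in> reps c')}"
    using net unfolding network_def R_def by auto
  have key: "\<forall>c\<in>R. level c = l \<longrightarrow> c \<notin> Blev level C children k r1 B l \<longrightarrow>
      (\<forall>v\<in>reps c. \<not> fires N layer reps E F \<tau> B l v)" for l
  proof (induction l)
    case 0
    show ?case
    proof (intro ballI impI notI)
      fix c v assume cR: "c \<in> R" and l0: "level c = 0" and nb: "c \<notin> Blev level C children k r1 B 0"
        and vr: "v \<in> reps c" and f: "fires N layer reps E F \<tau> B 0 v"
      then obtain b where bB: "b \<in> B" and vb: "v \<in> reps b" by auto
      have "b \<noteq> c" using nb bB B l0 by auto
      moreover have "b \<in> R" using bB B R_def by auto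
      ultimately show False using disj[OF \<open>b \<in> R\<close> cR] vb vr by auto
    qed
  next
    case (Suc l)
    show ?case
    proof (intro ballI impI notI)
      fix c v assume cR: "c \<in> R" and lS: "level c = Suc l" and nb: "c \<notin> Blev level C children k r1 B (Suc l)"
        and vr: "v \<in> reps c" and f: "fires N layer reps E F \<tau> B (Suc l) v"
      have cC: "c \<in> C" using cR lS R_def by auto
      have chc: "children c \<subseteq> {c'\<in>C. level c' = l}" "finite (children c)" "card (children c) = k"
        using ch[OF cC] lS by auto
      let ?Bl = "Blev level C children k r1 B l"
      have small: "real (card (children c \<inter> ?Bl)) < r1 * real k"
        using nb cC lS by auto
      have lv: "layer v = Suc l" using repsR[OF cR] vr lS by auto
      define S where "S = {u\<in>N. layer u = layer v - 1}"
      define P where "P = (\<lambda>u. (u, v) \<in> E \<and> fires N layer reps E F \<tau> B l u)"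
      have sumeq: "(\<Sum>u\<in>S. weight E u v * (if fires N layer reps E F \<tau> B l u then 1 else 0))
          = real (card {u\<in>S. P u})"
      proof -
        have "(\<Sum>u\<in>S. weight E u v * (if fires N layer reps E F \<tau> B l u then 1 else 0))
            = (\<Sum>u\<in>S. if P u then 1 else 0)"
          by (rule sum.cong) (auto simp: weight_def P_def)
        also have "\<dots> = (\<Sum>u\<in>{u\<in>S. P u}. 1)"
          using finN unfolding S_def by (subst sum.inter_filter) auto
        finally show ?thesis by simp
      qed
      have sub: "{u\<in>S. P u} \<subseteq> (\<Union>c'\<in>children c \<inter> ?Bl. reps c')"
      proof
        fix u assume "u \<in> {u\<in>S. P u}"
        then have uE: "(u, v) \<in> E" and fu: "fires N layer reps E F \<tau> B l u" by (auto simp: P_def)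
        then obtain c'' c' where c''C: "c'' \<in> C" "1 \<le> level c''" "v \<in> reps c''"
          and c'ch: "c' \<in> children c''" "u \<in> reps c'" using Esub by blast
        have "c'' = c" using disj[of c'' c] c''C cR vr R_def by auto
        then have c'c: "c' \<in> children c" using c'ch by simp
        then have c'R: "c' \<in> R" and lc': "level c' = l" using chc R_def by auto
        have "c' \<in> ?Bl" using Suc.IH c'R lc' c'ch fu by blast
        then show "u \<in> (\<Union>c'\<in>children c \<inter> ?Bl. reps c')" using c'c c'ch by blast
      qed
      have fin: "finite (\<Union>c'\<in>children c \<inter> ?Bl. reps c')"
        using chc repsR R_def by auto
      have "card {u\<in>S. P u} \<le> card (\<Union>c'\<in>children c \<inter> ?Bl. reps c')"
        by (rule card_mono[OF fin sub])
      also have "\<dots> \<le> (\<Sum>c'\<in>children c \<inter> ?Bl. card (reps c'))"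
        by (rule card_UN_le) (use chc in auto)
      also have "\<dots> = (\<Sum>c'\<in>children c \<inter> ?Bl. m)"
        by (rule sum.cong) (use chc repsR R_def in auto)
      also have "\<dots> = m * card (children c \<inter> ?Bl)" by simp
      finally have "real (card {u\<in>S. P u}) \<le> real m * real (card (children c \<inter> ?Bl))"
        by (metis of_nat_le_iff of_nat_mult mult.commute)
      also have "\<dots> < real m * (r1 * real k)" using small m by simp
      also have "\<dots> \<le> real m * (a * r2 * (1 - \<epsilon>) * real k)"
        using r1_le by (intro mult_left_mono mult_right_mono) auto
      also have "\<dots> = \<tau>" by (simp add: \<tau>_def)
      finally have lt: "real (card {u\<in>S. P u}) < \<tau>" .
      have "\<tau> \<le> (\<Sum>u\<in>S. weight E u v * (if fires N layer reps E F \<tau> B l u then 1 else 0))"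
        using f S_def by simp
      then show False using lt sumeq by simp
    qed
  qed
  have cD: "c \<in> D" using c CD by auto
  have "c \<notin> Blev level C children k r1 B (level c)"
    using c_notin lev cD unfolding supp_def by auto
  then show ?thesis using key[of "level c"] c v R_def \<tau>_def by auto
qed

end
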